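(* Let $\Phi_{\vec p}=\sum_{k,l}p_{kl}U_{kl}\otimes\overline{U}_{kl}$ be a Weyl channel lying in the simplex spanned by $\Phi_{X^k}=X^k\otimes\overline{X^k}$, $k=0,\dots,N-1$ (i.e. $p_{kl}=0$ whenever $l\neq0$), and let $T(\Phi_{\vec p})=\sum_{k}q_kX^k$ with $q_k=\sum_lp_{kl}$. Then the set of eigenvalues of the superoperator $\Phi_{\vec p}$ equals the spectrum of $T(\Phi_{\vec p})$; moreover the spectrum of $\Phi_{\vec p}$ is $N$-fold degenerate: its eigenvalues $\lambda_{mn}=\sum_{k,l}\omega^{ml-nk}p_{kl}$ satisfy $\lambda_{mn}=\xi_n$ for all $m$, where $\xi_n=\sum_k\omega^{-nk}q_k$, $n=0,\dots,N-1$, are the eigenvalues of $T(\Phi_{\vec p})$.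
   Context: Let $N\ge2$, $\omega=e^{2\pi i/N}$, $X|j\rangle=|j\oplus1\rangle$ (addition mod $N$), $Z=\mathrm{diag}(1,\omega,\dots,\omega^{N-1})$, Weyl unitaries $U_{kl}=X^kZ^l$, $k,l\in\{0,\dots,N-1\}$. Maps on $N\times N$ matrices are identified with superoperators ($N^2\times N^2$ matrices) acting on $|A\rangle\rangle=\sum A_{ij}|i\rangle|j\rangle$, so $\rho\mapsto K\rho K^\dagger$ corresponds to $K\otimes\overline{K}$. A Weyl channel is $\Phi_{\vec p}=\sum_{k,l}p_{kl}U_{kl}\otimes\overline{U}_{kl}$ with $(p_{kl})$ a probability vector. *)

theory Defs
  imports Complex_Main "Jordan_Normal_Form.Char_Poly"
begin

definition omega :: "nat \<Rightarrow> complex" where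
  "omega N = cis (2 * pi / real N)"

definition shiftX :: "nat \<Rightarrow> complex mat" where
  "shiftX N = mat N N (\<lambda>(i, j). if i = (j + 1) mod N then 1 else 0)"

definition clockZ :: "nat \<Rightarrow> complex mat" where
  "clockZ N = mat N N (\<lambda>(i, j). if i = j then omega N ^ i else 0)"

definition weylU :: "nat \<Rightarrow> nat \<Rightarrow> nat \<Rightarrow> complex mat" where
  "weylU N k l = (shiftX N ^\<^sub>m k) * (clockZ N ^\<^sub>m l)"

definition conj_mat :: "complex mat \<Rightarrow> complex mat" where
  "conj_mat A = map_mat cnj A"

(* Kronecker product of two N x N matrices, with index (i,j) -> i*N + j,
   matching |A>> = sum A_ij |i>|j> *)
definition kron :: "nat \<Rightarrow> complex mat \<Rightarrow> complex mat \<Rightarrow> complex mat" where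
  "kron N A B = mat (N * N) (N * N)
     (\<lambda>(r, c). A $$ (r div N, c div N) * B $$ (r mod N, c mod N))"

(* matrix sums written entrywise (matrices of fixed dimension) *)
definition weyl_channel :: "nat \<Rightarrow> (nat \<Rightarrow> nat \<Rightarrow> real) \<Rightarrow> complex mat" where
  "weyl_channel N p = mat (N * N) (N * N) (\<lambda>rc. \<Sum>k<N. \<Sum>l<N.
      complex_of_real (p k l) * kron N (weylU N k l) (conj_mat (weylU N k l)) $$ rc)"

definition qmarg :: "nat \<Rightarrow> (nat \<Rightarrow> nat \<Rightarrow> real) \<Rightarrow> nat \<Rightarrow> real" where
  "qmarg N p k = (\<Sum>l<N. p k l)"

definition Tmap :: "nat \<Rightarrow> (nat \<Rightarrow> nat \<Rightarrow> real) \<Rightarrow> complex mat" where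
  "Tmap N p = mat N N (\<lambda>rc. \<Sum>k<N. complex_of_real (qmarg N p k) * (shiftX N ^\<^sub>m k) $$ rc)"

definition lam :: "nat \<Rightarrow> (nat \<Rightarrow> nat \<Rightarrow> real) \<Rightarrow> nat \<Rightarrow> nat \<Rightarrow> complex" where
  "lam N p m n = (\<Sum>k<N. \<Sum>l<N.
      omega N powi (int m * int l - int n * int k) * complex_of_real (p k l))"

definition xi :: "nat \<Rightarrow> (nat \<Rightarrow> nat \<Rightarrow> real) \<Rightarrow> nat \<Rightarrow> complex" where
  "xi N p n = (\<Sum>k<N. omega N powi (- (int n * int k)) * complex_of_real (qmarg N p k))"

end

theory Submission imports Defs "HOL-Library.Real_Mod" "HOL-Number_Theory.Cong" begin

lemma char_poly_diag_sim:
  fixes A P Q :: "complex mat"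
  assumes A: "A \<in> carrier_mat n n" and P: "P \<in> carrier_mat n n" and Q: "Q \<in> carrier_mat n n"
    and QP: "Q * P = c \<cdot>\<^sub>m 1\<^sub>m n" and c: "c \<noteq> 0"
    and AP: "A * P = P * mat n n (\<lambda>(i,j). if i = j then d i else 0)"
  shows "char_poly A = (\<Prod>i<n. [:- d i, 1:])"
proof -
  define D where "D = mat n n (\<lambda>(i,j). if i = j then d i else (0::complex))"
  define Q' where "Q' = (1/c) \<cdot>\<^sub>m Q"
  have Q': "Q' \<in> carrier_mat n n" using Q by (simp add: Q'_def)
  have D: "D \<in> carrier_mat n n" by (simp add: D_def)
  have Q'P: "Q' * P = 1\<^sub>m n" unfolding Q'_def
    using Q P c by (simp add: mult_smult_assoc_mat QP, intro eq_matI, auto)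
  have PQ': "P * Q' = 1\<^sub>m n" by (rule mat_mult_left_right_inverse[OF Q' P Q'P])
  have "A = A * (P * Q')" using A by (simp add: PQ')
  also have "\<dots> = (A * P) * Q'" using A P Q' by (simp add: assoc_mult_mat)
  also have "\<dots> = P * D * Q'" using AP by (simp add: D_def)
  finally have "similar_mat A D" using A P Q' D PQ' Q'P by (intro similar_matI[of A D P Q' n]) auto
  then have "char_poly A = char_poly D" by (rule char_poly_similar)
  also have "\<dots> = (\<Prod>a\<leftarrow>diag_mat D. [:- a, 1:])"
    by (rule char_poly_upper_triangular[OF D]) (auto simp: upper_triangular_def D_def)
  also have "\<dots> = (\<Prod>i<n. [:- d i, 1:])"
    unfolding diag_mat_def D_def
    by (simp add: prod.distinct_set_conv_list[symmetric, of "[0..<n]", simplified] atLeast0LessThan)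
  finally show ?thesis .
qed

lemma omega_pow_N: "N > 0 \<Longrightarrow> omega N ^ N = 1"
  unfolding omega_def by (simp add: DeMoivre)

lemma omega_nz: "omega N \<noteq> 0"
  unfolding omega_def by simp

lemma omega_pow_ne1: assumes "0 < d" "d < N" shows "omega N ^ d \<noteq> 1"
proof
  assume "omega N ^ d = 1"
  then have "cis (real d * (2 * pi / real N)) = 1" unfolding omega_def by (simp add: DeMoivre)
  then obtain m where m: "real d * (2 * pi / real N) = of_int m * (2 * pi)" by (auto simp: cis_eq_1_iff)
  then have "real d = of_int m * real N" using assms by (simp add: field_simps)
  then have "int d = m * int N" by (metis of_int_eq_iff of_int_mult of_int_of_nat_eq)
  then show False using assms
    by (metis (no_types, opaque_lifting) int_ops(1) less_le_not_le mult_eq_0_iff nat_int_comparison(1) nat_int_comparison(2)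
      zdvd_imp_le zero_less_iff_neq_zero dvd_triv_right of_nat_less_iff)
qed

lemma omega_powi_mod: assumes "N > 0" shows "omega N powi a = omega N powi (a mod int N)"
proof -
  have "a = a mod int N + int N * (a div int N)" by simp
  then have "omega N powi a = omega N powi (a mod int N) * (omega N powi int N) powi (a div int N)"
    by (metis omega_nz power_int_add power_int_mult)
  also have "omega N powi int N = 1" using omega_pow_N[OF assms] by simp
  finally show ?thesis by simp
qed

lemma omega_geo: assumes "N > 0" "a < N" "b < N"
  shows "(\<Sum>j<N. omega N powi ((int a - int b) * int j)) = (if a = b then of_nat N else 0)"
proof (cases "a = b")
  case True then show ?thesis by simp
next
  case False
  define z where "z = omega N powi (int a - int b)"
  have zj: "omega N powi ((int a - int b) * int j) = z ^ j" for j
    unfolding z_def by (simp add: power_int_mult)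
  define d where "d = nat ((int a - int b) mod int N)"
  have "(int a - int b) mod int N = (if b < a then int a - int b else int a - int b + int N)"
  proof (cases "b < a")
    case True then show ?thesis using assms by (simp add: mod_pos_pos_trivial)
  next
    case False
    then have "(int a - int b) mod int N = (int a - int b + int N) mod int N" by simp
    also have "\<dots> = int a - int b + int N" using False assms \<open>a \<noteq> b\<close> by (intro mod_pos_pos_trivial) auto
    finally show ?thesis using False by simp
  qed
  then have d: "0 < d" "d < N" using False assms unfolding d_def by auto
  have "z = omega N powi int d" unfolding z_def d_def using omega_powi_mod[OF assms(1)] assms by simp
  then have z1: "z \<noteq> 1" using omega_pow_ne1[OF d] by simp
  have zN: "z ^ N = 1" unfolding z_def using omega_pow_N[OF assms(1)]
    by (metis mult.commute power_int_1_left power_int_mult power_int_of_nat)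
  show ?thesis using False z1 zN by (simp add: zj geometric_sum)
qed

lemma shift_pow:
  assumes N: "N > 0"
  shows "shiftX N ^\<^sub>m k \<in> carrier_mat N N \<and>
    (\<forall>i<N. \<forall>j<N. (shiftX N ^\<^sub>m k) $$ (i,j) = (if i = (j + k) mod N then 1 else 0))"
proof (induction k)
  case 0
  then show ?case by (simp add: shiftX_def)
next
  case (Suc k)
  have X: "shiftX N \<in> carrier_mat N N" by (simp add: shiftX_def)
  have c: "shiftX N ^\<^sub>m Suc k \<in> carrier_mat N N" proof -
    have IHc: "shiftX N ^\<^sub>m k \<in> carrier_mat N N" using Suc.IH by blast
    show ?thesis using mult_carrier_mat[OF IHc X] by simp
  qed
  have "(shiftX N ^\<^sub>m Suc k) $$ (i,j) = (if i = (j + Suc k) mod N then 1 else 0)" if ij: "i < N" "j < N" for i j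
  proof -
    have "(shiftX N ^\<^sub>m Suc k) $$ (i,j) = (\<Sum>t<N. (shiftX N ^\<^sub>m k) $$ (i,t) * shiftX N $$ (t,j))"
      using Suc X ij by (simp add: scalar_prod_def atLeast0LessThan)
    also have "\<dots> = (\<Sum>t<N. if t = (j+1) mod N then (if i = (t + k) mod N then 1 else 0) else 0)"
      using Suc ij by (intro sum.cong) (auto simp: shiftX_def)
    also have "\<dots> = (if i = ((j+1) mod N + k) mod N then 1 else 0)"
      using N by (subst sum.delta) auto
    also have "\<dots> = (if i = (j + Suc k) mod N then 1 else 0)"
      by (simp add: mod_add_left_eq)
    finally show ?thesis .
  qed
  then show ?case using c by blast
qed

lemma collapse:
  fixes N i k :: nat
  assumes N: "N > 0" and i: "i < N" and k: "k < N"
  shows "(\<Sum>j<N. if i = (j + k) mod N then g j else 0) = g ((i + N - k) mod N)"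
proof -
  have "(\<Sum>j<N. if i = (j + k) mod N then g j else 0) = (\<Sum>j<N. if j = (i + N - k) mod N then g j else 0)"
  proof (intro sum.cong refl)
    fix j assume j: "j \<in> {..<N}"
    have "i = (j + k) mod N \<longleftrightarrow> j = (i + N - k) mod N"
    proof
      assume h: "i = (j + k) mod N"
      show "j = (i + N - k) mod N"
      proof (cases "j + k < N")
        case True then have "i = j + k" using h by (simp add: mod_less)
        then show ?thesis using j by simp
      next
        case False
        then have "(j + k) mod N = j + k - N" using j k by (simp add: le_mod_geq)
        then have "i = j + k - N" using h by simp
        then have "i + N - k = j" using False by simp
        then show ?thesis using j by simp
      qed
    next
      assume h: "j = (i + N - k) mod N"
      show "i = (j + k) mod N"
      proof (cases "i < k")
        case True
        then have "j = i + N - k" using h i k by simp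
        then have "j + k = i + N" using True k by simp
        then show ?thesis using i by simp
      next
        case False
        then have "(i + N - k) mod N = i - k" using i k by (simp add: le_mod_geq)
        then have "j + k = i" using h False by simp
        then show ?thesis using i by simp
      qed
    qed
    then show "(if i = (j + k) mod N then g j else 0) = (if j = (i + N - k) mod N then g j else 0)" by simp
  qed
  also have "\<dots> = g ((i + N - k) mod N)" using N by (subst sum.delta) auto
  finally show ?thesis .
qed

lemma omega_shift:
  assumes N: "N > 0" and k: "k \<le> N"
  shows "omega N powi (int n * int ((i + N - k) mod N)) = omega N powi (int n * int i - int n * int k)"
proof -
  have e: "int ((i + N - k) mod N) = (int i + int N - int k) mod int N" using k by (simp add: of_nat_mod of_nat_diff)
  have "(int n * int ((i + N - k) mod N)) mod int N = (int n * (int i + int N - int k)) mod int N"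
    unfolding e by (simp add: mod_mult_right_eq)
  also have "\<dots> = (int n * int i - int n * int k + int N * int n) mod int N" by (simp add: algebra_simps)
  also have "\<dots> = (int n * int i - int n * int k) mod int N" by simp
  finally have m: "(int n * int ((i + N - k) mod N)) mod int N = (int n * int i - int n * int k) mod int N" .
  have "omega N powi (int n * int ((i + N - k) mod N)) = omega N powi ((int n * int ((i + N - k) mod N)) mod int N)"
    by (rule omega_powi_mod[OF N])
  also have "\<dots> = omega N powi ((int n * int i - int n * int k) mod int N)" by (simp only: m)
  also have "\<dots> = omega N powi (int n * int i - int n * int k)" by (rule omega_powi_mod[OF N, symmetric])
  finally show ?thesis .
qed

lemma shift_pow_carrier: "N > 0 \<Longrightarrow> shiftX N ^\<^sub>m k \<in> carrier_mat N N"
  using shift_pow by blast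

lemma shift_pow_entry: "N > 0 \<Longrightarrow> i < N \<Longrightarrow> j < N \<Longrightarrow>
   (shiftX N ^\<^sub>m k) $$ (i,j) = (if i = (j + k) mod N then 1 else 0)"
  using shift_pow by blast

lemma pair_index:
  fixes N :: nat
  assumes "N > 0"
  shows "bij_betw (\<lambda>(i,j). i * N + j) ({..<N} \<times> {..<N}) {..<N*N}"
proof (rule bij_betwI[where g = "\<lambda>r. (r div N, r mod N)"])
  show "(\<lambda>(i,j). i * N + j) \<in> {..<N} \<times> {..<N} \<rightarrow> {..<N*N}"
  proof
    fix x assume x: "x \<in> {..<N} \<times> {..<N}"
    obtain i j where ij: "x = (i,j)" "i < N" "j < N" using x by auto
    have "i * N + j < i * N + N" using ij by simp
    also have "\<dots> = (i + 1) * N" by simp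
    also have "\<dots> \<le> N * N" using ij by (intro mult_right_mono) auto
    finally show "(\<lambda>(i,j). i * N + j) x \<in> {..<N*N}" using ij by simp
  qed
  show "(\<lambda>r. (r div N, r mod N)) \<in> {..<N*N} \<rightarrow> {..<N} \<times> {..<N}"
    using assms by (auto simp: less_mult_imp_div_less)
  show "(\<lambda>r. (r div N, r mod N)) ((\<lambda>(i,j). i * N + j) x) = x" if "x \<in> {..<N} \<times> {..<N}" for x
    using that by auto
  show "(\<lambda>(i,j). i * N + j) ((\<lambda>r. (r div N, r mod N)) y) = y" if "y \<in> {..<N*N}" for y
    by simp
qed

lemma sum_NN:
  fixes N :: nat and f :: "nat \<Rightarrow> 'b::comm_monoid_add"
  assumes "N > 0"
  shows "(\<Sum>r<N*N. f r) = (\<Sum>i<N. \<Sum>j<N. f (i * N + j))"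
proof -
  have "(\<Sum>r<N*N. f r) = (\<Sum>x\<in>{..<N} \<times> {..<N}. f ((\<lambda>(i,j). i * N + j) x))"
    using sum.reindex_bij_betw[OF pair_index[OF assms], of f] by simp
  also have "\<dots> = (\<Sum>i<N. \<Sum>j<N. f (i * N + j))"
    by (simp add: sum.cartesian_product split_def)
  finally show ?thesis .
qed

lemma prod_NN:
  fixes N :: nat and f :: "nat \<Rightarrow> 'b::comm_monoid_mult"
  assumes "N > 0"
  shows "(\<Prod>r<N*N. f r) = (\<Prod>i<N. \<Prod>j<N. f (i * N + j))"
proof -
  have "(\<Prod>r<N*N. f r) = (\<Prod>x\<in>{..<N} \<times> {..<N}. f ((\<lambda>(i,j). i * N + j) x))"
    using prod.reindex_bij_betw[OF pair_index[OF assms], of f] by simp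
  also have "\<dots> = (\<Prod>i<N. \<Prod>j<N. f (i * N + j))"
    by (simp add: prod.cartesian_product split_def)
  finally show ?thesis .
qed

lemma prod_shift:
  fixes N a :: nat and f :: "nat \<Rightarrow> 'b::comm_monoid_mult"
  assumes "N > 0"
  shows "(\<Prod>b<N. f ((a + b) mod N)) = (\<Prod>n<N. f n)"
proof -
  have inj: "inj_on (\<lambda>b. (a + b) mod N) {..<N}"
  proof
    fix b b' assume b: "b \<in> {..<N}" "b' \<in> {..<N}" and e: "(a + b) mod N = (a + b') mod N"
    then have "[a + b = a + b'] (mod N)" by (simp add: cong_def)
    then have "[b = b'] (mod N)" by (simp add: cong_add_lcancel_nat)
    then show "b = b'" using b by (simp add: cong_def)
  qed
  have img: "(\<lambda>b. (a + b) mod N) ` {..<N} = {..<N}"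
    using assms inj by (intro endo_inj_surj) auto
  have "(\<Prod>n<N. f n) = (\<Prod>n\<in>(\<lambda>b. (a + b) mod N) ` {..<N}. f n)" by (simp add: img)
  also have "\<dots> = (\<Prod>b<N. f ((a + b) mod N))" by (simp add: prod.reindex[OF inj])
  finally show ?thesis by simp
qed

lemma qmarg_eq:
  assumes "\<And>k l. k < N \<Longrightarrow> l < N \<Longrightarrow> l \<noteq> 0 \<Longrightarrow> p k l = 0" "N > 0" "k < N"
  shows "qmarg N p k = p k 0"
proof -
  have "qmarg N p k = (\<Sum>l<N. if l = 0 then p k 0 else 0)"
    unfolding qmarg_def using assms by (intro sum.cong) auto
  then show ?thesis using assms by simp
qed

lemma Tmap_carrier: "Tmap N p \<in> carrier_mat N N" by (simp add: Tmap_def)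
lemma Phi_carrier: "weyl_channel N p \<in> carrier_mat (N*N) (N*N)" by (simp add: weyl_channel_def)

lemma Tmap_entry:
  assumes "N > 0" "i < N" "j < N"
  shows "Tmap N p $$ (i,j) = (\<Sum>k<N. of_real (qmarg N p k) * (if i = (j + k) mod N then 1 else 0))"
  using assms by (simp add: Tmap_def shift_pow_entry)

lemma Phi_entry:
  assumes z: "\<And>k l. k < N \<Longrightarrow> l < N \<Longrightarrow> l \<noteq> 0 \<Longrightarrow> p k l = 0" and N: "N > 0"
    and r: "r < N*N" and c: "c < N*N"
  shows "weyl_channel N p $$ (r,c) = (\<Sum>k<N. of_real (p k 0) *
     ((if r div N = (c div N + k) mod N then 1 else 0) * (if r mod N = (c mod N + k) mod N then 1 else 0)))"
proof -
  have rd: "r div N < N" "c div N < N" using r c by (auto simp: less_mult_imp_div_less)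
  have rm: "r mod N < N" "c mod N < N" using N by auto
  have U0: "weylU N k 0 = shiftX N ^\<^sub>m k" if "k < N" for k
    using shift_pow_carrier[OF N, of k] by (simp add: weylU_def clockZ_def right_mult_one_mat)
  have "weyl_channel N p $$ (r,c) = (\<Sum>k<N. \<Sum>l<N.
      complex_of_real (p k l) * kron N (weylU N k l) (conj_mat (weylU N k l)) $$ (r,c))"
    using r c by (simp add: weyl_channel_def)
  also have "\<dots> = (\<Sum>k<N. \<Sum>l<N. if l = 0 then
      complex_of_real (p k 0) * kron N (weylU N k 0) (conj_mat (weylU N k 0)) $$ (r,c) else 0)"
    using z by (intro sum.cong refl) auto
  also have "\<dots> = (\<Sum>k<N. complex_of_real (p k 0) * kron N (weylU N k 0) (conj_mat (weylU N k 0)) $$ (r,c))"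
    using N by simp
  also have "\<dots> = (\<Sum>k<N. of_real (p k 0) *
     ((if r div N = (c div N + k) mod N then 1 else 0) * (if r mod N = (c mod N + k) mod N then 1 else 0)))"
  proof (intro sum.cong refl)
    fix k assume k: "k \<in> {..<N}"
    have cX: "shiftX N ^\<^sub>m k \<in> carrier_mat N N" by (rule shift_pow_carrier[OF N])
    have cm: "conj_mat (shiftX N ^\<^sub>m k) $$ (a,b) = cnj ((shiftX N ^\<^sub>m k) $$ (a,b))" if "a < N" "b < N" for a b
      using that carrier_matD[OF cX] by (simp add: conj_mat_def)
    show "complex_of_real (p k 0) * kron N (weylU N k 0) (conj_mat (weylU N k 0)) $$ (r,c) = of_real (p k 0) *
     ((if r div N = (c div N + k) mod N then 1 else 0) * (if r mod N = (c mod N + k) mod N then 1 else 0))"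
      using k r c rd rm cX by (simp add: U0 kron_def cm shift_pow_entry[OF N])
  qed
  finally show ?thesis .
qed

lemma omega_mul: "omega N powi a * omega N powi b = omega N powi (a + b)"
  by (simp add: power_int_add omega_nz)

lemma diag_right:
  fixes P :: "complex mat"
  assumes "P \<in> carrier_mat n n" "i < n" "j < n"
  shows "(P * mat n n (\<lambda>(i,j). if i = j then d i else 0)) $$ (i,j) = P $$ (i,j) * d j"
proof -
  have "(P * mat n n (\<lambda>(i,j). if i = j then d i else 0)) $$ (i,j) =
     (\<Sum>t<n. P $$ (i,t) * (if t = j then d t else 0))"
    using assms by (simp add: scalar_prod_def atLeast0LessThan)
  also have "\<dots> = (\<Sum>t<n. if t = j then P $$ (i,t) * d j else 0)" by (intro sum.cong) auto
  also have "\<dots> = P $$ (i,j) * d j" using assms by simp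
  finally show ?thesis .
qed

lemma Tmap_char:
  assumes N: "N > 0"
  shows "char_poly (Tmap N p) = (\<Prod>n<N. [:- xi N p n, 1:])"
proof -
  define w where "w = omega N"
  define P where "P = mat N N (\<lambda>(j,n). w powi (int n * int j))"
  define Q where "Q = mat N N (\<lambda>(n,j). w powi (- (int n * int j)))"
  have P: "P \<in> carrier_mat N N" and Q: "Q \<in> carrier_mat N N" by (auto simp: P_def Q_def)
  have QP: "Q * P = of_nat N \<cdot>\<^sub>m 1\<^sub>m N"
  proof (rule eq_matI)
    fix n n' assume nn: "n < dim_row (of_nat N \<cdot>\<^sub>m 1\<^sub>m N :: complex mat)" "n' < dim_col (of_nat N \<cdot>\<^sub>m 1\<^sub>m N :: complex mat)"
    then have nn: "n < N" "n' < N" by auto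
    have "(Q * P) $$ (n,n') = (\<Sum>j<N. w powi (- (int n * int j)) * w powi (int n' * int j))"
      using nn by (simp add: P_def Q_def scalar_prod_def atLeast0LessThan)
    also have "\<dots> = (\<Sum>j<N. omega N powi ((int n' - int n) * int j))"
      unfolding w_def omega_mul by (simp add: algebra_simps)
    also have "\<dots> = (if n' = n then of_nat N else 0)" by (rule omega_geo[OF N nn(2) nn(1)])
    finally show "(Q * P) $$ (n,n') = (of_nat N \<cdot>\<^sub>m 1\<^sub>m N) $$ (n,n')" using nn by auto
  qed (auto simp: P_def Q_def)
  have TP: "Tmap N p * P = P * mat N N (\<lambda>(i,j). if i = j then xi N p i else 0)"
  proof (rule eq_matI)
    fix i n assume nn: "i < dim_row (P * mat N N (\<lambda>(i,j). if i = j then xi N p i else 0))"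
      "n < dim_col (P * mat N N (\<lambda>(i,j). if i = j then xi N p i else 0))"
    then have nn: "i < N" "n < N" by (auto simp: P_def)
    have "(Tmap N p * P) $$ (i,n) = (\<Sum>j<N. Tmap N p $$ (i,j) * w powi (int n * int j))"
      using nn Tmap_carrier[of N p] by (simp add: P_def scalar_prod_def atLeast0LessThan)
    also have "\<dots> = (\<Sum>j<N. \<Sum>k<N. of_real (qmarg N p k) * (if i = (j + k) mod N then w powi (int n * int j) else 0))"
      using nn N apply (simp add: Tmap_entry sum_distrib_right) by (intro sum.cong refl) auto
    also have "\<dots> = (\<Sum>k<N. of_real (qmarg N p k) * (\<Sum>j<N. if i = (j + k) mod N then w powi (int n * int j) else 0))"
      by (subst sum.swap) (simp add: sum_distrib_left)
    also have "\<dots> = (\<Sum>k<N. of_real (qmarg N p k) * (w powi (int n * int i) * w powi (- (int n * int k))))"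
    proof (intro sum.cong refl)
      fix k assume k: "k \<in> {..<N}"
      have "(\<Sum>j<N. if i = (j + k) mod N then w powi (int n * int j) else 0) = w powi (int n * int ((i + N - k) mod N))"
        using collapse[OF N nn(1), of k "\<lambda>j. w powi (int n * int j)"] k by simp
      also have "\<dots> = w powi (int n * int i) * w powi (- (int n * int k))"
        unfolding w_def using k by (simp add: omega_shift[OF N] omega_mul)
      finally show "of_real (qmarg N p k) * (\<Sum>j<N. if i = (j + k) mod N then w powi (int n * int j) else 0) =
          of_real (qmarg N p k) * (w powi (int n * int i) * w powi (- (int n * int k)))" by simp
    qed
    also have "\<dots> = w powi (int n * int i) * xi N p n"
      unfolding xi_def w_def by (simp add: sum_distrib_left algebra_simps)
    also have "\<dots> = (P * mat N N (\<lambda>(i,j). if i = j then xi N p i else 0)) $$ (i,n)"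
      using diag_right[OF P nn] by (simp add: P_def nn)
    finally show "(Tmap N p * P) $$ (i,n) = (P * mat N N (\<lambda>(i,j). if i = j then xi N p i else 0)) $$ (i,n)" .
  qed (auto simp: P_def Tmap_def)
  show ?thesis
    by (rule char_poly_diag_sim[OF Tmap_carrier P Q QP _ TP]) (use N in simp)
qed

lemma omega_modexp:
  assumes N: "N > 0"
  shows "omega N powi (- (int ((a + b) mod N) * int k)) = omega N powi (- (int a * int k) - int b * int k)"
proof -
  have "(- (int ((a + b) mod N) * int k)) mod int N = (- ((int a + int b) mod int N * int k)) mod int N"
    by (simp add: of_nat_mod)
  also have "\<dots> = (- ((int a + int b) * int k)) mod int N"
    by (metis mod_minus_eq mod_mult_left_eq)
  also have "\<dots> = (- (int a * int k) - int b * int k) mod int N" by (simp add: algebra_simps)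
  finally have m: "(- (int ((a + b) mod N) * int k)) mod int N = (- (int a * int k) - int b * int k) mod int N" .
  show ?thesis
    by (subst (1 2) omega_powi_mod[OF N]) (simp only: m)
qed

lemma NN_div: "j < N \<Longrightarrow> (i * N + j) div (N::nat) = i"
  by simp
lemma NN_mod: "j < N \<Longrightarrow> (i * N + j) mod (N::nat) = j"
  by simp

lemma Phi_char:
  assumes N: "N > 0" and z: "\<And>k l. k < N \<Longrightarrow> l < N \<Longrightarrow> l \<noteq> 0 \<Longrightarrow> p k l = 0"
  shows "char_poly (weyl_channel N p) = (\<Prod>c<N*N. [:- xi N p ((c div N + c mod N) mod N), 1:])"
proof -
  define w where "w = omega N"
  define P where "P = mat (N*N) (N*N) (\<lambda>(r,c). w powi (int (c div N) * int (r div N) + int (c mod N) * int (r mod N)))"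
  define Q where "Q = mat (N*N) (N*N) (\<lambda>(c,r). w powi (- (int (c div N) * int (r div N) + int (c mod N) * int (r mod N))))"
  define D where "D = mat (N*N) (N*N) (\<lambda>(i,j). if i = j then xi N p ((i div N + i mod N) mod N) else 0)"
  have P: "P \<in> carrier_mat (N*N) (N*N)" and Q: "Q \<in> carrier_mat (N*N) (N*N)" by (auto simp: P_def Q_def)
  have QP: "Q * P = of_nat (N*N) \<cdot>\<^sub>m 1\<^sub>m (N*N)"
  proof (rule eq_matI)
    fix c c' assume cc: "c < dim_row (of_nat (N*N) \<cdot>\<^sub>m 1\<^sub>m (N*N) :: complex mat)" "c' < dim_col (of_nat (N*N) \<cdot>\<^sub>m 1\<^sub>m (N*N) :: complex mat)"
    then have cc: "c < N*N" "c' < N*N" by auto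
    define a where "a = c div N" define b where "b = c mod N"
    define a' where "a' = c' div N" define b' where "b' = c' mod N"
    have ab: "a < N" "b < N" "a' < N" "b' < N" using cc N by (auto simp: a_def b_def a'_def b'_def less_mult_imp_div_less)
    have ceq: "c = c' \<longleftrightarrow> a' = a \<and> b' = b"
      unfolding a_def b_def a'_def b'_def by (metis div_mult_mod_eq)
    have "(Q * P) $$ (c,c') = (\<Sum>r<N*N. Q $$ (c,r) * P $$ (r,c'))"
      using cc by (simp add: P_def Q_def scalar_prod_def atLeast0LessThan)
    also have "\<dots> = (\<Sum>i<N. \<Sum>j<N. Q $$ (c,i*N+j) * P $$ (i*N+j,c'))" by (rule sum_NN[OF N])
    also have "\<dots> = (\<Sum>i<N. \<Sum>j<N. w powi ((int a' - int a) * int i) * w powi ((int b' - int b) * int j))"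
    proof (intro sum.cong refl)
      fix i j assume ij: "i \<in> {..<N}" "j \<in> {..<N}"
      have r: "i * N + j < N * N" using pair_index[OF N] ij unfolding bij_betw_def by auto
      show "Q $$ (c,i*N+j) * P $$ (i*N+j,c') = w powi ((int a' - int a) * int i) * w powi ((int b' - int b) * int j)"
        using cc r ij unfolding P_def Q_def w_def a_def b_def a'_def b'_def
        by (simp add: omega_mul algebra_simps)
    qed
    also have "\<dots> = (\<Sum>i<N. w powi ((int a' - int a) * int i)) * (\<Sum>j<N. w powi ((int b' - int b) * int j))"
      by (simp add: sum_product)
    also have "\<dots> = (if a' = a then of_nat N else 0) * (if b' = b then of_nat N else 0)"
      unfolding w_def using omega_geo[OF N ab(3) ab(1)] omega_geo[OF N ab(4) ab(2)] by simp
    also have "\<dots> = (of_nat (N*N) \<cdot>\<^sub>m 1\<^sub>m (N*N) :: complex mat) $$ (c,c')"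
      using cc ceq by auto
    finally show "(Q * P) $$ (c,c') = (of_nat (N*N) \<cdot>\<^sub>m 1\<^sub>m (N*N) :: complex mat) $$ (c,c')" .
  qed (auto simp: P_def Q_def)
  have TP: "weyl_channel N p * P = P * D"
  proof (rule eq_matI)
    fix r c assume rc: "r < dim_row (P * D)" "c < dim_col (P * D)"
    then have rc: "r < N*N" "c < N*N" by (auto simp: P_def D_def)
    define a where "a = c div N" define b where "b = c mod N"
    define i where "i = r div N" define j where "j = r mod N"
    have ab: "a < N" "b < N" "i < N" "j < N" using rc N by (auto simp: a_def b_def i_def j_def less_mult_imp_div_less)
    have "(weyl_channel N p * P) $$ (r,c) = (\<Sum>c'<N*N. weyl_channel N p $$ (r,c') * P $$ (c',c))"
      using rc Phi_carrier[of N p] by (simp add: P_def scalar_prod_def atLeast0LessThan)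
    also have "\<dots> = (\<Sum>a'<N. \<Sum>b'<N. weyl_channel N p $$ (r,a'*N+b') * P $$ (a'*N+b',c))" by (rule sum_NN[OF N])
    also have "\<dots> = (\<Sum>a'<N. \<Sum>b'<N. \<Sum>k<N. of_real (p k 0) *
        ((if i = (a' + k) mod N then w powi (int a * int a') else 0) *
         (if j = (b' + k) mod N then w powi (int b * int b') else 0)))"
    proof (intro sum.cong refl)
      fix a' b' assume ij: "a' \<in> {..<N}" "b' \<in> {..<N}"
      have r: "a' * N + b' < N * N" using pair_index[OF N] ij unfolding bij_betw_def by auto
      have "weyl_channel N p $$ (r,a'*N+b') = (\<Sum>k<N. of_real (p k 0) *
         ((if i = (a' + k) mod N then 1 else 0) * (if j = (b' + k) mod N then 1 else 0)))"
        using Phi_entry[OF z N rc(1) r] ij by (simp add: i_def j_def)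
      moreover have "P $$ (a'*N+b',c) = w powi (int a * int a') * w powi (int b * int b')"
        using rc r ij unfolding P_def a_def b_def by (simp add: omega_mul w_def)
      ultimately show "weyl_channel N p $$ (r,a'*N+b') * P $$ (a'*N+b',c) = (\<Sum>k<N. of_real (p k 0) *
        ((if i = (a' + k) mod N then w powi (int a * int a') else 0) *
         (if j = (b' + k) mod N then w powi (int b * int b') else 0)))"
        by (simp add: sum_distrib_right) (intro sum.cong refl, auto)
    qed
    also have "\<dots> = (\<Sum>k<N. of_real (p k 0) *
        ((\<Sum>a'<N. if i = (a' + k) mod N then w powi (int a * int a') else 0) *
         (\<Sum>b'<N. if j = (b' + k) mod N then w powi (int b * int b') else 0)))"
    proof -
      have "\<And>F. (\<Sum>a'<N. \<Sum>b'<N. \<Sum>k<N. F a' b' k) = (\<Sum>k<N. \<Sum>a'<N. \<Sum>b'<N. F a' b' k :: complex)"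
      proof -
        fix F :: "nat \<Rightarrow> nat \<Rightarrow> nat \<Rightarrow> complex"
        have "(\<Sum>a'<N. \<Sum>b'<N. \<Sum>k<N. F a' b' k) = (\<Sum>a'<N. \<Sum>k<N. \<Sum>b'<N. F a' b' k)"
          by (rule sum.cong[OF refl]) (rule sum.swap)
        also have "\<dots> = (\<Sum>k<N. \<Sum>a'<N. \<Sum>b'<N. F a' b' k)" by (rule sum.swap)
        finally show "(\<Sum>a'<N. \<Sum>b'<N. \<Sum>k<N. F a' b' k) = (\<Sum>k<N. \<Sum>a'<N. \<Sum>b'<N. F a' b' k)" .
      qed
      note sw = this
      show ?thesis apply (subst sw) apply (rule sum.cong[OF refl])
        apply (subst sum_product) by (simp only: sum_distrib_left)
    qed
    also have "\<dots> = (\<Sum>k<N. of_real (p k 0) * (w powi (int a * int i + int b * int j) *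
        w powi (- (int ((a + b) mod N) * int k))))"
    proof (intro sum.cong refl)
      fix k assume k: "k \<in> {..<N}"
      have "(\<Sum>a'<N. if i = (a' + k) mod N then w powi (int a * int a') else 0) = w powi (int a * int i - int a * int k)"
        using collapse[OF N ab(3), of k "\<lambda>a'. w powi (int a * int a')"] k unfolding w_def by (simp add: omega_shift[OF N])
      moreover have "(\<Sum>b'<N. if j = (b' + k) mod N then w powi (int b * int b') else 0) = w powi (int b * int j - int b * int k)"
        using collapse[OF N ab(4), of k "\<lambda>b'. w powi (int b * int b')"] k unfolding w_def by (simp add: omega_shift[OF N])
      moreover have "w powi (int a * int i - int a * int k) * w powi (int b * int j - int b * int k) =
         w powi (int a * int i + int b * int j) * w powi (- (int ((a + b) mod N) * int k))"
        unfolding w_def omega_modexp[OF N] omega_mul by (simp add: algebra_simps)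
      ultimately show "of_real (p k 0) *
        ((\<Sum>a'<N. if i = (a' + k) mod N then w powi (int a * int a') else 0) *
         (\<Sum>b'<N. if j = (b' + k) mod N then w powi (int b * int b') else 0)) =
         of_real (p k 0) * (w powi (int a * int i + int b * int j) * w powi (- (int ((a + b) mod N) * int k)))"
        by simp
    qed
    also have "\<dots> = w powi (int a * int i + int b * int j) * xi N p ((a + b) mod N)"
      unfolding xi_def w_def using qmarg_eq[OF z N]
      by (simp add: sum_distrib_left algebra_simps)
    also have "\<dots> = (P * D) $$ (r,c)"
      using diag_right[OF P rc] rc unfolding D_def by (simp add: P_def a_def b_def i_def j_def)
    finally show "(weyl_channel N p * P) $$ (r,c) = (P * D) $$ (r,c)" .
  qed (auto simp: P_def D_def weyl_channel_def)
  show ?thesis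
    by (rule char_poly_diag_sim[OF Phi_carrier P Q QP _ TP[unfolded D_def]]) (use N in simp)
qed

theorem proposition3:
  fixes N :: nat and p :: "nat \<Rightarrow> nat \<Rightarrow> real"
  assumes "N \<ge> 2"
    and "\<And>k l. k < N \<Longrightarrow> l < N \<Longrightarrow> p k l \<ge> 0"
    and "(\<Sum>k<N. \<Sum>l<N. p k l) = 1"
    and "\<And>k l. k < N \<Longrightarrow> l < N \<Longrightarrow> l \<noteq> 0 \<Longrightarrow> p k l = 0"
  shows "{e. eigenvalue (weyl_channel N p) e} = {e. eigenvalue (Tmap N p) e}
    \<and> char_poly (weyl_channel N p) = (\<Prod>m<N. \<Prod>n<N. [:- lam N p m n, 1:])
    \<and> char_poly (Tmap N p) = (\<Prod>n<N. [:- xi N p n, 1:])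
    \<and> (\<forall>m<N. \<forall>n<N. lam N p m n = xi N p n)"
proof -
  have N: "N > 0" using assms(1) by simp
  note z = assms(4)
  have lx: "lam N p m n = xi N p n" if "m < N" "n < N" for m n
  proof -
    have "lam N p m n = (\<Sum>k<N. \<Sum>l<N. if l = 0 then omega N powi (- (int n * int k)) * complex_of_real (p k 0) else 0)"
      unfolding lam_def using z by (intro sum.cong refl) auto
    also have "\<dots> = (\<Sum>k<N. omega N powi (- (int n * int k)) * complex_of_real (p k 0))" using N by simp
    also have "\<dots> = xi N p n" unfolding xi_def using qmarg_eq[OF z N] by simp
    finally show ?thesis .
  qed
  have cT: "char_poly (Tmap N p) = (\<Prod>n<N. [:- xi N p n, 1:])" by (rule Tmap_char[OF N])
  have "char_poly (weyl_channel N p) = (\<Prod>c<N*N. [:- xi N p ((c div N + c mod N) mod N), 1:])"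
    by (rule Phi_char[OF N z])
  also have "\<dots> = (\<Prod>a<N. \<Prod>b<N. [:- xi N p (((a * N + b) div N + (a * N + b) mod N) mod N), 1:])"
    by (rule prod_NN[OF N])
  also have "\<dots> = (\<Prod>a<N. \<Prod>b<N. [:- xi N p ((a + b) mod N), 1:])"
    by (intro prod.cong refl) simp
  also have "\<dots> = (\<Prod>a<N. \<Prod>n<N. [:- xi N p n, 1:])"
    by (rule prod.cong[OF refl]) (rule prod_shift[OF N])
  also have "\<dots> = (\<Prod>m<N. \<Prod>n<N. [:- lam N p m n, 1:])"
    using lx by (intro prod.cong refl) simp
  finally have cP: "char_poly (weyl_channel N p) = (\<Prod>m<N. \<Prod>n<N. [:- lam N p m n, 1:])" .
  have eT: "eigenvalue (Tmap N p) e \<longleftrightarrow> (\<exists>n<N. e = xi N p n)" for e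
    unfolding eigenvalue_root_char_poly[OF Tmap_carrier] cT by (auto simp: poly_prod)
  have eP: "eigenvalue (weyl_channel N p) e \<longleftrightarrow> (\<exists>n<N. e = xi N p n)" for e
  proof -
    have "eigenvalue (weyl_channel N p) e \<longleftrightarrow> (\<exists>a<N. \<exists>n<N. e = xi N p n)"
      unfolding eigenvalue_root_char_poly[OF Phi_carrier] cP using lx by (auto simp: poly_prod)
    then show ?thesis using N by auto
  qed
  show ?thesis using eT eP cT cP lx by auto
qed

end
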